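(* Let $n,m\ge1$ and let $v=(v_1,\dots,v_m)$ with $v_j\in\mathbb R^n$ be indeterminates (so $mn$ real coordinates). Let $(a_{ij})$ be a real $n\times m$ matrix of rank $n$, and $t_i=\sum_ja_{ij}v_j$ ($i=1,\dots,n$). Let $b_1,\dots,b_n$ be real linear combinations of the scalar products $(v_h,v_k)$. Let $d(v)$ be the determinant of the $n\times n$ matrix with rows $t_1,\dots,t_n$, and let $x=(f_1/d,\dots,f_n/d)$ (with $f_i$ polynomials in $v$) be the solution, given by Cramer's rule, of the linear system $(x,t_i)=b_i$, $i=1,\dots,n$. Assume there exist $a=\sum_jc_jv_j$ with $c_j\in\mathbb R$ and $b$ a real linear combination of the $(v_h,v_k)$ such that $$|x|^2+(x,a)+b=0$$ identically in $v$. Then $x$ is a polynomial in the coordinates of $v$, i.e. $d$ divides each $f_i$.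
   Context: $(\cdot,\cdot)$ denotes the standard scalar product on $\mathbb R^n$ and $|x|^2=(x,x)$. *)

theory Defs
  imports "HOL-Analysis.Analysis"
begin

text \<open>The indeterminates: v = (v_1,...,v_m), each v_j in R^n, modelled as v :: (real^'n)^'m.
  A :: real^'m^'n is the n x m coefficient matrix (a_ij).\<close>

definition tmat :: "real^'m^'n \<Rightarrow> (real^'n)^'m \<Rightarrow> real^'n^'n" where
  "tmat A v = (\<chi> i. \<Sum>j\<in>UNIV. A $ i $ j *\<^sub>R (v $ j))"

definition sp_comb :: "('m \<Rightarrow> 'm \<Rightarrow> real) \<Rightarrow> (real^'n)^'m \<Rightarrow> real" where
  "sp_comb beta v = (\<Sum>h\<in>UNIV. \<Sum>k\<in>UNIV. beta h k * ((v $ h) \<bullet> (v $ k)))"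

definition rhs :: "('n \<Rightarrow> 'm \<Rightarrow> 'm \<Rightarrow> real) \<Rightarrow> (real^'n)^'m \<Rightarrow> real^'n" where
  "rhs B v = (\<chi> i. sp_comb (B i) v)"

definition cramer_num :: "real^'m^'n \<Rightarrow> ('n \<Rightarrow> 'm \<Rightarrow> 'm \<Rightarrow> real) \<Rightarrow> 'n \<Rightarrow> (real^'n)^'m \<Rightarrow> real" where
  "cramer_num A B k v =
     det (\<chi> i j. if j = k then rhs B v $ i else tmat A v $ i $ j)"

definition cramer_sol :: "real^'m^'n \<Rightarrow> ('n \<Rightarrow> 'm \<Rightarrow> 'm \<Rightarrow> real) \<Rightarrow> (real^'n)^'m \<Rightarrow> real^'n" where
  "cramer_sol A B v = (\<chi> k. cramer_num A B k v / det (tmat A v))"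

end

theory Submission
  imports Defs
begin


definition Bl :: "('m \<Rightarrow> 'm \<Rightarrow> real) \<Rightarrow> real^'m \<Rightarrow> real^'m \<Rightarrow> real" where
  "Bl \<beta> x y = (\<Sum>h\<in>UNIV. \<Sum>k\<in>UNIV. \<beta> h k * x$h * y$k)"

lemma Bl_lin1: "linear (\<lambda>x. Bl \<beta> x y)"
  by (rule linearI) (simp_all add: Bl_def algebra_simps sum.distrib sum_distrib_left)

lemma Bl_lin2: "linear (\<lambda>y. Bl \<beta> x y)"
  by (rule linearI) (simp_all add: Bl_def algebra_simps sum.distrib sum_distrib_left)

lemma Bl_add1: "Bl \<beta> (x + x') y = Bl \<beta> x y + Bl \<beta> x' y"
  using linear_add[OF Bl_lin1] by blast
lemma Bl_add2: "Bl \<beta> y (x + x') = Bl \<beta> y x + Bl \<beta> y x'"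
  using linear_add[OF Bl_lin2] by blast
lemma Bl_diff1: "Bl \<beta> (x - x') y = Bl \<beta> x y - Bl \<beta> x' y"
  using linear_diff[OF Bl_lin1] by blast
lemma Bl_diff2: "Bl \<beta> y (x - x') = Bl \<beta> y x - Bl \<beta> y x'"
  using linear_diff[OF Bl_lin2] by blast
lemma Bl_scale1: "Bl \<beta> (a *\<^sub>R x) y = a * Bl \<beta> x y"
  using linear_scale[OF Bl_lin1] by fastforce
lemma Bl_scale2: "Bl \<beta> y (a *\<^sub>R x) = a * Bl \<beta> y x"
  using linear_scale[OF Bl_lin2] by fastforce
lemma Bl_sum1: "Bl \<beta> (\<Sum>l\<in>I. f l) y = (\<Sum>l\<in>I. Bl \<beta> (f l) y)"
  using linear_sum[OF Bl_lin1] by blast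
lemma Bl_sum2: "Bl \<beta> y (\<Sum>l\<in>I. f l) = (\<Sum>l\<in>I. Bl \<beta> y (f l))"
  using linear_sum[OF Bl_lin2] by blast
lemma Bl_zero1: "Bl \<beta> 0 y = 0" by (simp add: Bl_def)

lemma sum_axis1: "(\<Sum>l\<in>UNIV. (axis i (1::real))$l * F l) = F i"
proof -
  have "(\<Sum>l\<in>UNIV. (axis i (1::real))$l * F l) = (\<Sum>l\<in>UNIV. if l = i then F i else 0)"
    by (rule sum.cong) (auto simp: axis_def)
  then show ?thesis by simp
qed

lemma sum_if_eq: "(\<Sum>l\<in>UNIV. (a::real^'n)$l * (if i = l then m else 0)) = a$i * m"
proof -
  have "(\<Sum>l\<in>UNIV. a$l * (if i = l then m else 0)) = (\<Sum>l\<in>UNIV. if l = i then a$i * m else 0)"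
    by (rule sum.cong) auto
  then show ?thesis by simp
qed

definition vec2 :: "'n \<Rightarrow> 'n \<Rightarrow> real \<Rightarrow> real \<Rightarrow> real^'n" where
  "vec2 i k a b = (\<chi> j. if j = i then a else if j = k then b else 0)"

lemma sum_vec2: "i \<noteq> k \<Longrightarrow> (\<Sum>l\<in>UNIV. (vec2 i k a b)$l * F l) = a * F i + b * F k"
proof -
  assume ik: "i \<noteq> k"
  have "(\<Sum>l\<in>UNIV. (vec2 i k a b)$l * F l) = (\<Sum>l\<in>UNIV. (if l = i then a * F i else 0) + (if l = k then b * F k else 0))"
    by (rule sum.cong) (use ik in \<open>auto simp: vec2_def\<close>)
  also have "\<dots> = a * F i + b * F k" by (simp add: sum.distrib)
  finally show ?thesis .
qed

lemma alg:
  fixes A :: "real^'m^'n" and B :: "'n \<Rightarrow> 'm \<Rightarrow> 'm \<Rightarrow> real" and S :: "real^'n^'m"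
  assumes AS: "A ** S = mat 1"
    and C: "\<And>z r. z \<bullet> (A *v r) = 0 \<Longrightarrow> (\<Sum>i\<in>UNIV. z$i * Bl (B i) r r) = 0"
  shows "\<exists>c::real^'m. \<forall>i r. Bl (B i) r r = (A$i \<bullet> r) * (c \<bullet> r)"
proof -
  define s where "s l = column l S" for l
  have As: "A *v s l = axis l 1" for l
  proof -
    have "(A ** S)$i$l = (mat 1::real^'n^'n)$i$l" for i using AS by simp
    then show ?thesis
      by (simp add: matrix_matrix_mult_def matrix_vector_mult_def column_def s_def mat_def axis_def vec_eq_iff)
  qed
  define W where "W \<alpha> = (\<Sum>l\<in>UNIV. \<alpha>$l *\<^sub>R s l)" for \<alpha> :: "real^'n"
  have AW: "A *v W \<alpha> = \<alpha>" for \<alpha>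
  proof -
    have "A *v W \<alpha> = (\<Sum>l\<in>UNIV. \<alpha>$l *\<^sub>R (A *v s l))"
      unfolding W_def by (simp add: linear_sum[OF matrix_vector_mul_linear] linear_scale[OF matrix_vector_mul_linear])
    also have "\<dots> = \<alpha>" using basis_expansion[of \<alpha>] by (simp add: As scalar_mult_eq_scaleR)
    finally show ?thesis .
  qed
  define Sy where "Sy i x y = Bl (B i) x y + Bl (B i) y x" for i x y
  have ker0: "Bl (B i) y y = 0" if "A *v y = 0" for i y
    using C[of "axis i 1" y] that by (simp add: sum_axis1)
  have SyW: "Sy i y (W \<alpha>) = (\<Sum>l\<in>UNIV. \<alpha>$l * Sy i y (s l))" for i y \<alpha>
    by (simp add: Sy_def W_def Bl_sum1 Bl_sum2 Bl_scale1 Bl_scale2 sum.distrib algebra_simps)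
  have BWW: "Bl (B i) (W \<alpha>) (W \<alpha>) = (\<Sum>l\<in>UNIV. \<alpha>$l * (\<Sum>k\<in>UNIV. \<alpha>$k * Bl (B i) (s l) (s k)))" for i \<alpha>
    apply (simp only: W_def Bl_sum1 Bl_sum2 Bl_scale1 Bl_scale2)
    apply (simp add: sum_distrib_left)
    apply (subst sum.swap)
    apply (simp add: mult_ac)
    done
  have expand: "Bl (B i) (x + y) (x + y) = Bl (B i) x x + Sy i x y + Bl (B i) y y" for i x y
    by (simp add: Sy_def Bl_add1 Bl_add2)
  have G2: "(\<Sum>i\<in>UNIV. z$i * (\<Sum>l\<in>UNIV. \<alpha>$l * (\<Sum>k\<in>UNIV. \<alpha>$k * Bl (B i) (s l) (s k)))) = 0"
    if "z \<bullet> \<alpha> = 0" for z \<alpha>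
    using C[of z "W \<alpha>"] that by (simp add: AW BWW)
  have G1: "(\<Sum>i\<in>UNIV. z$i * (\<Sum>l\<in>UNIV. \<alpha>$l * Sy i y (s l))) = 0"
    if y: "A *v y = 0" and "z \<bullet> \<alpha> = 0" for y z \<alpha>
  proof -
    have "A *v (y + W \<alpha>) = \<alpha>" using y AW by (simp add: matrix_vector_right_distrib)
    then have "(\<Sum>i\<in>UNIV. z$i * Bl (B i) (y + W \<alpha>) (y + W \<alpha>)) = 0" using C[of z "y + W \<alpha>"] that by simp
    then have "(\<Sum>i\<in>UNIV. z$i * Sy i y (W \<alpha>) + z$i * Bl (B i) (W \<alpha>) (W \<alpha>)) = 0"
      by (simp add: expand ker0[OF y] algebra_simps)
    moreover have "(\<Sum>i\<in>UNIV. z$i * Bl (B i) (W \<alpha>) (W \<alpha>)) = 0"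
      using C[of z "W \<alpha>"] that by (simp add: AW)
    ultimately show ?thesis by (simp add: sum.distrib SyW)
  qed
  have inner_axis2: "(axis i (1::real)) \<bullet> \<alpha> = \<alpha>$i" for i \<alpha>
    by (simp add: inner_vec_def sum_axis1)
  have inner_vec2: "(vec2 i k a b) \<bullet> \<alpha> = a * \<alpha>$i + b * \<alpha>$k" if "i \<noteq> k" for i k a b \<alpha>
    using sum_vec2[OF that] by (simp add: inner_vec_def)
  have F1a: "Sy i y (s l) = 0" if y: "A *v y = 0" and il: "i \<noteq> l" for i l y
  proof -
    have "axis i 1 \<bullet> axis l (1::real) = 0" unfolding inner_axis2 using il by (simp add: axis_def)
    from G1[OF y this] show ?thesis by (simp add: sum_axis1)
  qed
  have F1b: "Sy i y (s i) = Sy k y (s k)" if y: "A *v y = 0" and ik: "i \<noteq> k" for i k y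
  proof -
    have "vec2 i k 1 (-1) \<bullet> vec2 i k 1 1 = 0" unfolding inner_vec2[OF ik] using ik by (simp add: vec2_def)
    from G1[OF y this] show ?thesis using ik F1a[OF y ik] F1a[OF y, of k i] ik
      by (simp add: sum_vec2)
  qed
  obtain i0 :: 'n where True by blast
  define \<mu> where "\<mu> y = Sy i0 y (s i0)" for y
  have F1: "Sy i y (s l) = (if i = l then \<mu> y else 0)" if y: "A *v y = 0" for i l y
    using F1a[OF y] F1b[OF y] unfolding \<mu>_def by (cases "i = i0") auto
  have F2a: "Bl (B i) (s l) (s l) = 0" if "i \<noteq> l" for i l
  proof -
    have "axis i 1 \<bullet> axis l (1::real) = 0" unfolding inner_axis2 using that by (simp add: axis_def)
    from G2[OF this] show ?thesis by (simp add: sum_axis1)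
  qed
  have F2b: "Sy i (s l) (s k) = 0" if "i \<noteq> l" "i \<noteq> k" "l \<noteq> k" for i l k
  proof -
    have "axis i 1 \<bullet> vec2 l k 1 1 = 0" unfolding inner_axis2 using that by (simp add: vec2_def)
    from G2[OF this] show ?thesis using that F2a[of i l] F2a[of i k]
      by (simp add: sum_axis1 sum_vec2 Sy_def)
  qed
  define d where "d k = Bl (B k) (s k) (s k)" for k
  have F2c: "Sy i (s i) (s k) = d k \<and> Sy k (s i) (s k) = d i" if ik: "i \<noteq> k" for i k
  proof -
    have "vec2 i k 1 (-1) \<bullet> vec2 i k 1 1 = 0" unfolding inner_vec2[OF ik] using ik by (simp add: vec2_def)
    from G2[OF this] have e1: "(Bl (B i) (s i) (s i) + Bl (B i) (s i) (s k) + (Bl (B i) (s k) (s i) + Bl (B i) (s k) (s k)))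
       - (Bl (B k) (s i) (s i) + Bl (B k) (s i) (s k) + (Bl (B k) (s k) (s i) + Bl (B k) (s k) (s k))) = 0"
      using ik by (simp add: sum_vec2)
    have "vec2 i k (-1) (-1) \<bullet> vec2 i k 1 (-1) = 0" unfolding inner_vec2[OF ik] using ik by (simp add: vec2_def)
    from G2[OF this] have e2: "- (Bl (B i) (s i) (s i) - Bl (B i) (s i) (s k) - (Bl (B i) (s k) (s i) - Bl (B i) (s k) (s k)))
       - (Bl (B k) (s i) (s i) - Bl (B k) (s i) (s k) - (Bl (B k) (s k) (s i) - Bl (B k) (s k) (s k))) = 0"
      using ik by (simp add: sum_vec2)
    show ?thesis using e1 e2 F2a[OF ik] F2a[of k i] ik unfolding Sy_def d_def by auto
  qed
  have F2: "Sy i (s l) (s k) = (if i = l then d k else 0) + (if i = k then d l else 0)" for i l k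
  proof (cases "l = k")
    case True
    then show ?thesis using F2a[of i l] by (auto simp: Sy_def d_def)
  next
    case False
    then show ?thesis using F2b[of i l k] F2c[of i k] F2c[of l i] F2c[of l k] F2c[of i l]
      by (cases "i = l"; cases "i = k") (auto simp: Sy_def)
  qed
  define L where "L r = \<mu> (r - W (A *v r)) + (\<Sum>k\<in>UNIV. (A *v r)$k * d k)" for r
  have main: "Bl (B i) r r = (A *v r)$i * L r" for i r
  proof -
    define \<alpha> where "\<alpha> = A *v r"
    define y where "y = r - W \<alpha>"
    have y0: "A *v y = 0" by (simp add: y_def AW matrix_vector_mult_diff_distrib \<alpha>_def)
    have r: "r = y + W \<alpha>" by (simp add: y_def)
    have "Bl (B i) r r = Bl (B i) y y + Sy i y (W \<alpha>) + Bl (B i) (W \<alpha>) (W \<alpha>)" using expand r by metis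
    also have "\<dots> = \<alpha>$i * \<mu> y + (\<Sum>l\<in>UNIV. \<alpha>$l * (\<Sum>k\<in>UNIV. \<alpha>$k * Bl (B i) (s l) (s k)))"
      by (simp add: ker0[OF y0] SyW F1[OF y0] sum_if_eq BWW)
    also have "(\<Sum>l\<in>UNIV. \<alpha>$l * (\<Sum>k\<in>UNIV. \<alpha>$k * Bl (B i) (s l) (s k))) = \<alpha>$i * (\<Sum>k\<in>UNIV. \<alpha>$k * d k)"
    proof -
      have sw: "(\<Sum>l\<in>UNIV. \<alpha>$l * (\<Sum>k\<in>UNIV. \<alpha>$k * Bl (B i) (s l) (s k)))
          = (\<Sum>l\<in>UNIV. \<alpha>$l * (\<Sum>k\<in>UNIV. \<alpha>$k * Bl (B i) (s k) (s l)))"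
        apply (simp add: sum_distrib_left)
        apply (subst sum.swap)
        apply (simp add: mult_ac)
        done
      have "2 * (\<Sum>l\<in>UNIV. \<alpha>$l * (\<Sum>k\<in>UNIV. \<alpha>$k * Bl (B i) (s l) (s k)))
          = (\<Sum>l\<in>UNIV. \<alpha>$l * (\<Sum>k\<in>UNIV. \<alpha>$k * Sy i (s l) (s k)))"
        using sw by (simp add: Sy_def sum.distrib algebra_simps)
      also have "\<dots> = (\<Sum>l\<in>UNIV. \<alpha>$l * ((if i = l then (\<Sum>k\<in>UNIV. \<alpha>$k * d k) else 0) + \<alpha>$i * d l))"
      proof (rule sum.cong[OF refl])
        fix l
        have "(\<Sum>k\<in>UNIV. \<alpha>$k * Sy i (s l) (s k)) = (\<Sum>k\<in>UNIV. \<alpha>$k * (if i = l then d k else 0) + \<alpha>$k * (if i = k then d l else 0))"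
          by (simp add: F2 algebra_simps)
        also have "\<dots> = (if i = l then (\<Sum>k\<in>UNIV. \<alpha>$k * d k) else 0) + \<alpha>$i * d l"
          by (simp add: sum.distrib sum_if_eq)
        finally show "\<alpha>$l * (\<Sum>k\<in>UNIV. \<alpha>$k * Sy i (s l) (s k)) = \<alpha>$l * ((if i = l then (\<Sum>k\<in>UNIV. \<alpha>$k * d k) else 0) + \<alpha>$i * d l)"
          by simp
      qed
      also have "\<dots> = 2 * (\<alpha>$i * (\<Sum>k\<in>UNIV. \<alpha>$k * d k))"
        by (simp add: distrib_left sum.distrib sum_if_eq sum_distrib_left algebra_simps)
      finally show ?thesis by simp
    qed
    finally show ?thesis by (simp add: L_def \<alpha>_def y_def algebra_simps)
  qed
  have linW: "linear W"
    by (rule linearI) (simp_all add: W_def scaleR_add_left sum.distrib scaleR_sum_right)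
  have linL: "linear L"
    by (rule linearI) (simp_all add: L_def \<mu>_def Sy_def Bl_add1 Bl_add2 Bl_scale1 Bl_scale2 Bl_diff1 Bl_diff2
        matrix_vector_right_distrib linear_add[OF linW] linear_scale[OF linW] matrix_vector_mult_scaleR
        sum.distrib sum_distrib_left algebra_simps)
  define c where "c = (\<chi> j. L (axis j 1))"
  have Lc: "L r = c \<bullet> r" for r
  proof -
    have "L r = L (\<Sum>j\<in>UNIV. r$j *\<^sub>R axis j 1)" using basis_expansion[of r] by (simp add: scalar_mult_eq_scaleR)
    also have "\<dots> = (\<Sum>j\<in>UNIV. r$j * L (axis j 1))" by (simp add: linear_sum[OF linL] linear_scale[OF linL])
    also have "\<dots> = c \<bullet> r" by (simp add: c_def inner_vec_def mult_ac)
    finally show ?thesis .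
  qed
  have Ai: "(A *v r)$i = A$i \<bullet> r" for i r
    by (simp add: matrix_vector_mult_def inner_vec_def mult_ac)
  show ?thesis using main Lc Ai by metis
qed



lemma norm_bound_aux:
  fixes t Ka Ks :: real
  assumes "t \<ge> 0" "Ka \<ge> 0" "Ks \<ge> 0" "t\<^sup>2 \<le> t * Ka + Ks"
  shows "t \<le> Ka + Ks + 1"
proof (rule ccontr)
  assume "\<not> ?thesis"
  then have t: "t > Ka + Ks + 1" by simp
  then have "t * t > t * (Ka + Ks + 1)" using assms by (intro mult_strict_left_mono) auto
  moreover have "t * (Ks + 1) \<ge> 1 * (Ks + 1)" using t assms by (intro mult_right_mono) auto
  ultimately have "t * t > t * Ka + Ks + 1" by (simp add: algebra_simps)
  then show False using assms(4) by (simp add: power2_eq_square)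
qed

lemma tmat_nth: "tmat A v $ i $ l = (\<Sum>j\<in>UNIV. A$i$j * v$j$l)"
  by (simp add: tmat_def sum_component)

lemma mv_inner: "(M *v x) $ i = M$i \<bullet> x"
  by (simp add: matrix_vector_mult_def inner_vec_def mult_ac)

lemma inner_axis_l: "(axis i (1::real)) \<bullet> \<alpha> = \<alpha>$i"
  by (simp add: inner_vec_def sum_axis1)

lemma keyC:
  fixes A :: "real^'m^'n"
    and B :: "'n \<Rightarrow> 'm \<Rightarrow> 'm \<Rightarrow> real"
    and c :: "'m \<Rightarrow> real"
    and beta :: "'m \<Rightarrow> 'm \<Rightarrow> real"
    and S :: "real^'n^'m"
  assumes AS: "A ** S = mat 1"
    and ident: "\<forall>v :: (real^'n)^'m. det (tmat A v) \<noteq> 0 \<longrightarrow>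
        (let x = cramer_sol A B v
         in (norm x)\<^sup>2 + x \<bullet> (\<Sum>j\<in>UNIV. c j *\<^sub>R (v $ j)) + sp_comb beta v = 0)"
    and zr: "z \<bullet> (A *v r) = 0"
  shows "(\<Sum>i\<in>UNIV. z$i * Bl (B i) r r) = 0"
proof -
  obtain i1 :: 'n where True by blast
  define e where "e = (axis i1 1 :: real^'n)"
  have ee: "e \<bullet> e = 1" unfolding e_def inner_axis_l by (simp add: axis_def)
  define u where "u = A *v r"
  define v0 where "v0 = ((\<chi> j. r$j *\<^sub>R e) :: (real^'n)^'m)"
  define V where "V \<epsilon> = v0 + \<epsilon> *\<^sub>R S" for \<epsilon> :: real
  have Trow: "tmat A (V \<epsilon>) $ i = u$i *\<^sub>R e + \<epsilon> *\<^sub>R axis i 1" for \<epsilon> i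
  proof -
    have "(A ** S)$i$l = (mat 1::real^'n^'n)$i$l" for l using AS by simp
    then have "(\<Sum>j\<in>UNIV. A$i$j * S$j$l) = (if l = i then 1 else 0)" for l
      by (auto simp: matrix_matrix_mult_def mat_def)
    then have "(\<Sum>j\<in>UNIV. \<epsilon> * (A$i$j * S$j$l)) = (if l = i then \<epsilon> else 0)" for l
      by (simp add: sum_distrib_left[symmetric])
    then show ?thesis
      by (simp add: vec_eq_iff tmat_nth V_def v0_def u_def matrix_vector_mult_def axis_def
          algebra_simps sum.distrib sum_distrib_left sum_distrib_right)
  qed
  have TV: "tmat A (V \<epsilon>) *v x = (e \<bullet> x) *\<^sub>R u + \<epsilon> *\<^sub>R x" for \<epsilon> x
    by (simp add: vec_eq_iff mv_inner Trow inner_add_left inner_axis_l mult_ac)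
  have zu: "z \<bullet> u = 0" using zr u_def by simp
  have detnz: "det (tmat A (V \<epsilon>)) \<noteq> 0" if "\<epsilon> > 0" "\<epsilon> \<noteq> - (e \<bullet> u)" for \<epsilon>
  proof -
    have "x = 0" if "tmat A (V \<epsilon>) *v x = 0" for x
    proof -
      have eq: "(e \<bullet> x) *\<^sub>R u + \<epsilon> *\<^sub>R x = 0" using that TV by simp
      then have "e \<bullet> ((e \<bullet> x) *\<^sub>R u + \<epsilon> *\<^sub>R x) = 0" by simp
      then have "(e \<bullet> x) * ((e \<bullet> u) + \<epsilon>) = 0" by (simp add: algebra_simps)
      moreover have "(e \<bullet> u) + \<epsilon> \<noteq> 0" using \<open>\<epsilon> \<noteq> - (e \<bullet> u)\<close> by linarith
      ultimately have "e \<bullet> x = 0" by simp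
      then show "x = 0" using eq \<open>\<epsilon> > 0\<close> by simp
    qed
    then have "\<exists>M. M ** tmat A (V \<epsilon>) = mat 1" using matrix_left_invertible_ker by blast
    then show ?thesis using invertible_left_inverse invertible_det_nz by blast
  qed
  define x where "x \<epsilon> = cramer_sol A B (V \<epsilon>)" for \<epsilon>
  have Tx: "tmat A (V \<epsilon>) *v x \<epsilon> = rhs B (V \<epsilon>)" if "det (tmat A (V \<epsilon>)) \<noteq> 0" for \<epsilon>
    using cramer[OF that, of "x \<epsilon>" "rhs B (V \<epsilon>)"] by (simp add: x_def cramer_sol_def cramer_num_def)
  define F where "F \<epsilon> = (\<Sum>i\<in>UNIV. z$i * sp_comb (B i) (V \<epsilon>))" for \<epsilon>
  have zrhs: "z \<bullet> rhs B v = (\<Sum>i\<in>UNIV. z$i * sp_comb (B i) v)" for v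
    by (simp add: rhs_def inner_vec_def)
  have Feq: "F \<epsilon> = \<epsilon> * (z \<bullet> x \<epsilon>)" if "det (tmat A (V \<epsilon>)) \<noteq> 0" for \<epsilon>
  proof -
    have "F \<epsilon> = z \<bullet> (tmat A (V \<epsilon>) *v x \<epsilon>)" using Tx[OF that] zrhs F_def by simp
    also have "\<dots> = \<epsilon> * (z \<bullet> x \<epsilon>)" by (simp add: TV inner_add_right zu)
    finally show ?thesis .
  qed
  have F0: "F 0 = (\<Sum>i\<in>UNIV. z$i * Bl (B i) r r)"
    by (simp add: F_def V_def v0_def sp_comb_def Bl_def ee mult_ac)
  define a where "a \<epsilon> = (\<Sum>j\<in>UNIV. c j *\<^sub>R (V \<epsilon> $ j))" for \<epsilon>
  define s where "s \<epsilon> = sp_comb beta (V \<epsilon>)" for \<epsilon>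
  have contF: "isCont F 0"
    unfolding F_def sp_comb_def V_def by (intro continuous_intros isCont_vec_nth)
  have conta: "isCont a 0"
    unfolding a_def V_def by (intro continuous_intros isCont_vec_nth)
  have conts: "isCont s 0"
    unfolding s_def sp_comb_def V_def by (intro continuous_intros isCont_vec_nth)
  have limF: "(F \<longlongrightarrow> F 0) (at_right 0)"
    using contF unfolding isCont_def filterlim_at_split by blast
  have lima: "(a \<longlongrightarrow> a 0) (at_right 0)"
    using conta unfolding isCont_def filterlim_at_split by blast
  have lims: "(s \<longlongrightarrow> s 0) (at_right 0)"
    using conts unfolding isCont_def filterlim_at_split by blast
  define Ka where "Ka = norm (a 0) + 1"
  define Ks where "Ks = \<bar>s 0\<bar> + 1"
  have ev1: "eventually (\<lambda>\<epsilon>. \<epsilon> > 0 \<and> \<epsilon> \<noteq> - (e \<bullet> u)) (at_right (0::real))"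
    unfolding eventually_at_right_field
  proof (cases "- (e \<bullet> u) > 0")
    case True
    then show "\<exists>b>0. \<forall>y>0. y < b \<longrightarrow> y > 0 \<and> y \<noteq> - (e \<bullet> u)"
      by (intro exI[of _ "- (e \<bullet> u)"]) auto
  next
    case False
    then show "\<exists>b>0. \<forall>y>0. y < b \<longrightarrow> y > 0 \<and> y \<noteq> - (e \<bullet> u)"
      by (intro exI[of _ 1]) auto
  qed
  have ev2: "eventually (\<lambda>\<epsilon>. norm (a \<epsilon>) < Ka) (at_right (0::real))"
    using order_tendstoD(2)[OF tendsto_norm[OF lima]] Ka_def by simp
  have ev3: "eventually (\<lambda>\<epsilon>. \<bar>s \<epsilon>\<bar> < Ks) (at_right (0::real))"
    using order_tendstoD(2)[OF tendsto_rabs[OF lims]] Ks_def by simp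
  have evb: "eventually (\<lambda>\<epsilon>. norm (F \<epsilon>) \<le> \<epsilon> * (norm z * (Ka + Ks + 1))) (at_right (0::real))"
    using ev1 ev2 ev3
  proof eventually_elim
    case (elim \<epsilon>)
    then have dn: "det (tmat A (V \<epsilon>)) \<noteq> 0" using detnz by blast
    have id: "(norm (x \<epsilon>))\<^sup>2 + x \<epsilon> \<bullet> a \<epsilon> + s \<epsilon> = 0"
      using ident dn by (simp add: x_def a_def s_def Let_def)
    have "(norm (x \<epsilon>))\<^sup>2 \<le> \<bar>x \<epsilon> \<bullet> a \<epsilon>\<bar> + \<bar>s \<epsilon>\<bar>" using id by linarith
    also have "\<dots> \<le> norm (x \<epsilon>) * norm (a \<epsilon>) + \<bar>s \<epsilon>\<bar>" using Cauchy_Schwarz_ineq2 by simp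
    also have "\<dots> \<le> norm (x \<epsilon>) * Ka + Ks"
      using elim by (intro add_mono mult_left_mono) auto
    finally have nx: "norm (x \<epsilon>) \<le> Ka + Ks + 1"
      by (intro norm_bound_aux) (auto simp: Ka_def Ks_def)
    have "norm (F \<epsilon>) = \<epsilon> * \<bar>z \<bullet> x \<epsilon>\<bar>" using Feq[OF dn] elim by (simp add: abs_mult)
    also have "\<dots> \<le> \<epsilon> * (norm z * norm (x \<epsilon>))"
      using elim Cauchy_Schwarz_ineq2 by (intro mult_left_mono) auto
    also have "\<dots> \<le> \<epsilon> * (norm z * (Ka + Ks + 1))"
      using elim nx by (intro mult_left_mono) auto
    finally show ?case .
  qed
  have "((\<lambda>\<epsilon>. \<epsilon> * (norm z * (Ka + Ks + 1))) \<longlongrightarrow> 0 * (norm z * (Ka + Ks + 1))) (at_right (0::real))"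
    by (intro tendsto_intros)
  then have "(F \<longlongrightarrow> 0) (at_right 0)"
    using Lim_null_comparison[OF evb] by simp
  then have "F 0 = 0" using tendsto_unique[OF trivial_limit_at_right_real limF] by blast
  then show ?thesis using F0 by simp
qed



theorem mainTheorem10:
  fixes A :: "real^'m^'n"
    and B :: "'n \<Rightarrow> 'm \<Rightarrow> 'm \<Rightarrow> real"
    and c :: "'m \<Rightarrow> real"
    and beta :: "'m \<Rightarrow> 'm \<Rightarrow> real"
  assumes rank: "rank A = CARD('n)"
    and ident: "\<forall>v :: (real^'n)^'m. det (tmat A v) \<noteq> 0 \<longrightarrow>
        (let x = cramer_sol A B v
         in (norm x)\<^sup>2 + x \<bullet> (\<Sum>j\<in>UNIV. c j *\<^sub>R (v $ j)) + sp_comb beta v = 0)"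
  shows "\<forall>k. \<exists>g :: (real^'n)^'m \<Rightarrow> real. real_polynomial_function g \<and>
           (\<forall>v. cramer_num A B k v = det (tmat A v) * g v)"
proof -
  obtain S :: "real^'n^'m" where AS: "A ** S = mat 1"
    using rank full_rank_surjective[of A] matrix_right_invertible_surjective[of A] by blast
  have C: "\<And>z r. z \<bullet> (A *v r) = 0 \<Longrightarrow> (\<Sum>i\<in>UNIV. z$i * Bl (B i) r r) = 0"
    using keyC[OF AS ident] by blast
  obtain cc :: "real^'m" where cc: "\<And>i r. Bl (B i) r r = (A$i \<bullet> r) * (cc \<bullet> r)"
    using alg[OF AS C] by blast
  have spc: "sp_comb (B i) v = (tmat A v $ i) \<bullet> (\<Sum>j\<in>UNIV. cc$j *\<^sub>R v$j)" for i v
  proof -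
    have "sp_comb (B i) v = (\<Sum>h\<in>UNIV. \<Sum>k\<in>UNIV. \<Sum>l\<in>UNIV. B i h k * v$h$l * v$k$l)"
      by (simp add: sp_comb_def inner_vec_def sum_distrib_left mult_ac)
    also have "\<dots> = (\<Sum>h\<in>UNIV. \<Sum>l\<in>UNIV. \<Sum>k\<in>UNIV. B i h k * v$h$l * v$k$l)"
      by (rule sum.cong[OF refl], rule sum.swap)
    also have "\<dots> = (\<Sum>l\<in>UNIV. \<Sum>h\<in>UNIV. \<Sum>k\<in>UNIV. B i h k * v$h$l * v$k$l)"
      by (rule sum.swap)
    also have "\<dots> = (\<Sum>l\<in>UNIV. Bl (B i) (\<chi> h. v$h$l) (\<chi> h. v$h$l))"
      by (simp add: Bl_def)
    also have "\<dots> = (\<Sum>l\<in>UNIV. (A$i \<bullet> (\<chi> h. v$h$l)) * (cc \<bullet> (\<chi> h. v$h$l)))"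
      by (simp add: cc)
    also have "\<dots> = (tmat A v $ i) \<bullet> (\<Sum>j\<in>UNIV. cc$j *\<^sub>R v$j)"
      by (simp add: inner_vec_def tmat_def sum_component mult_ac)
    finally show ?thesis .
  qed
  have rhsT: "rhs B v = tmat A v *v (\<Sum>j\<in>UNIV. cc$j *\<^sub>R v$j)" for v
    by (simp add: vec_eq_iff rhs_def mv_inner spc)
  show ?thesis
  proof
    fix k
    show "\<exists>g :: (real^'n)^'m \<Rightarrow> real. real_polynomial_function g \<and>
           (\<forall>v. cramer_num A B k v = det (tmat A v) * g v)"
    proof (intro exI conjI allI)
      have bl: "bounded_linear (\<lambda>v :: (real^'n)^'m. v$j$k)" for j
        by (rule bounded_linear_compose[of "\<lambda>x::real^'n. x$k" "\<lambda>v::(real^'n)^'m. v$j", OF bounded_linear_vec_nth bounded_linear_vec_nth])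
      show "real_polynomial_function (\<lambda>v :: (real^'n)^'m. \<Sum>j\<in>UNIV. cc$j * v$j$k)"
        by (intro real_polynomial_function_sum real_polynomial_function.intros
            bl) simp
      fix v :: "(real^'n)^'m"
      show "cramer_num A B k v = det (tmat A v) * (\<Sum>j\<in>UNIV. cc$j * v$j$k)"
        unfolding cramer_num_def rhsT cramer_lemma by (simp add: sum_component mult_ac)
    qed
  qed
qed

end
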